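(* Let $(V,\nu,\tau,\tau^* )$ be a PN space in which $\nu(V)\subseteq D^+$ and $\tau(D^+\times D^+)\subseteq D^+$. Then every $D$-compact subset $A$ of $V$ is $D$-bounded and closed (in the strong topology).
   Context: $\Delta^{+}$ is the set of functions $F:[-\infty,+\infty]\to[0,1]$ that are left-continuous on $\mathbb{R}$, nondecreasing, with $F(0)=0$ and $F(+\infty)=1$, ordered pointwise; $D^{+}=\{F\in\Delta^{+}: l^{-}F(+\infty)=1\}$, where $l^{-}f(x)=\lim_{t\to x^{-}}f(t)$. $\varepsilon_0$ is the d.f. equal to $0$ for $x\le0$ and $1$ for $x>0$. A triangle function is a map $\tau:\Delta^+\times\Delta^+\to\Delta^+$ that is associative, commutative, nondecreasing in each argument, with unit $\varepsilon_0$. A PN space is a quadruple $(V,\nu,\tau,\tau^* )$ with $V$ a real vector space, $\tau\le\tau^*$ continuous triangle functions, and $\nu:V\to\Delta^+$ such that for all $p,q\in V$: (N1) $\nu_p=\varepsilon_0$ iff $p=\theta$; (N2) $\nu_{-p}=\nu_p$; (N3) $\nu_{p+q}\ge\tau(\nu_p,\nu_q)$; (N4) $\nu_p\le\tau^*(\nu_{\lambda p},\nu_{(1-\lambda)p})$ for all $\lambda\in[0,1]$. The strong topology on $V$ is generated by the neighborhoods $N_p(\lambda)=\{q\in V:\nu_{p-q}(\lambda)>1-\lambda\}$, $\lambda>0$; $(p_m)$ strongly converges to $p$ if for every $\lambda>0$ eventually $p_m\in N_p(\lambda)$. For nonempty $A\subseteq V$, $R_A(x)=l^{-}\inf\{\nu_q(x):q\in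 A\}$ for $x\in[0,+\infty)$ and $R_A(+\infty)=1$; $A$ is $D$-bounded if $R_A\in D^+$. A subset $A\subseteq V$ is $D$-compact if every sequence in $A$ has a subsequence strongly converging to a vector of $A$. *)

theory Defs
  imports "HOL-Analysis.Analysis"
begin

text \<open>Distribution functions are modelled as maps from the extended reals
  [-\<infinity>,+\<infinity>] to real numbers.\<close>

type_synonym dfun = "ereal \<Rightarrow> real"

definition Delta_plus :: "dfun set" where
  "Delta_plus = {F. (\<forall>x. 0 \<le> F x \<and> F x \<le> 1)
                 \<and> (\<forall>x::real. continuous (at_left x) (\<lambda>t. F (ereal t)))
                 \<and> mono F \<and> F 0 = 0 \<and> F PInfty = 1}"

definition D_plus :: "dfun set" where
  "D_plus = {F \<in> Delta_plus. ((\<lambda>t. F (ereal t)) \<longlongrightarrow> 1) at_top}"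

definition eps0 :: dfun where
  "eps0 = (\<lambda>x. if x \<le> 0 then 0 else 1)"

definition triangle_function :: "(dfun \<Rightarrow> dfun \<Rightarrow> dfun) \<Rightarrow> bool" where
  "triangle_function \<tau> \<longleftrightarrow>
     (\<forall>F\<in>Delta_plus. \<forall>G\<in>Delta_plus. \<tau> F G \<in> Delta_plus)
   \<and> (\<forall>F\<in>Delta_plus. \<forall>G\<in>Delta_plus. \<forall>H\<in>Delta_plus. \<tau> (\<tau> F G) H = \<tau> F (\<tau> G H))
   \<and> (\<forall>F\<in>Delta_plus. \<forall>G\<in>Delta_plus. \<tau> F G = \<tau> G F)
   \<and> (\<forall>F\<in>Delta_plus. \<forall>F'\<in>Delta_plus. \<forall>G\<in>Delta_plus. F \<le> F' \<longrightarrow> \<tau> F G \<le> \<tau> F' G)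
   \<and> (\<forall>F\<in>Delta_plus. \<tau> F eps0 = F)"

text \<open>Weak convergence in Delta_plus: convergence at every continuity point in (0,\<infinity>)
  of the limit (this topology is metrizable by the Sibley metric, so sequential
  continuity is continuity).\<close>

definition weak_conv :: "(nat \<Rightarrow> dfun) \<Rightarrow> dfun \<Rightarrow> bool" where
  "weak_conv Fs F \<longleftrightarrow> (\<forall>x::real. 0 < x \<longrightarrow> isCont (\<lambda>t. F (ereal t)) x \<longrightarrow>
       (\<lambda>n. Fs n (ereal x)) \<longlonglongrightarrow> F (ereal x))"

definition continuous_tf :: "(dfun \<Rightarrow> dfun \<Rightarrow> dfun) \<Rightarrow> bool" where
  "continuous_tf \<tau> \<longleftrightarrow> (\<forall>Fs Gs F G. (\<forall>n. Fs n \<in> Delta_plus) \<longrightarrow> (\<forall>n. Gs n \<in> Delta_plus)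
       \<longrightarrow> F \<in> Delta_plus \<longrightarrow> G \<in> Delta_plus \<longrightarrow> weak_conv Fs F \<longrightarrow> weak_conv Gs G
       \<longrightarrow> weak_conv (\<lambda>n. \<tau> (Fs n) (Gs n)) (\<tau> F G))"

definition PN_space :: "('a::real_vector \<Rightarrow> dfun) \<Rightarrow> (dfun \<Rightarrow> dfun \<Rightarrow> dfun)
                         \<Rightarrow> (dfun \<Rightarrow> dfun \<Rightarrow> dfun) \<Rightarrow> bool" where
  "PN_space \<nu> \<tau> \<tau>s \<longleftrightarrow>
     triangle_function \<tau> \<and> triangle_function \<tau>s \<and> continuous_tf \<tau> \<and> continuous_tf \<tau>s
   \<and> (\<forall>F\<in>Delta_plus. \<forall>G\<in>Delta_plus. \<tau> F G \<le> \<tau>s F G)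
   \<and> (\<forall>p. \<nu> p \<in> Delta_plus)
   \<and> (\<forall>p. \<nu> p = eps0 \<longleftrightarrow> p = 0)
   \<and> (\<forall>p. \<nu> (- p) = \<nu> p)
   \<and> (\<forall>p q. \<nu> (p + q) \<ge> \<tau> (\<nu> p) (\<nu> q))
   \<and> (\<forall>p. \<forall>l::real. 0 \<le> l \<and> l \<le> 1 \<longrightarrow> \<nu> p \<le> \<tau>s (\<nu> (l *\<^sub>R p)) (\<nu> ((1 - l) *\<^sub>R p)))"

definition strong_nbhd :: "('a::real_vector \<Rightarrow> dfun) \<Rightarrow> 'a \<Rightarrow> real \<Rightarrow> 'a set" where
  "strong_nbhd \<nu> p l = {q. \<nu> (p - q) (ereal l) > 1 - l}"

definition strong_open :: "('a::real_vector \<Rightarrow> dfun) \<Rightarrow> 'a set \<Rightarrow> bool" where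
  "strong_open \<nu> U \<longleftrightarrow> (\<forall>p\<in>U. \<exists>l>0. strong_nbhd \<nu> p l \<subseteq> U)"

definition strong_closed :: "('a::real_vector \<Rightarrow> dfun) \<Rightarrow> 'a set \<Rightarrow> bool" where
  "strong_closed \<nu> A \<longleftrightarrow> strong_open \<nu> (- A)"

definition strong_conv :: "('a::real_vector \<Rightarrow> dfun) \<Rightarrow> (nat \<Rightarrow> 'a) \<Rightarrow> 'a \<Rightarrow> bool" where
  "strong_conv \<nu> s p \<longleftrightarrow> (\<forall>l>0. eventually (\<lambda>m. s m \<in> strong_nbhd \<nu> p l) sequentially)"

definition prob_radius :: "('a::real_vector \<Rightarrow> dfun) \<Rightarrow> 'a set \<Rightarrow> dfun" where
  "prob_radius \<nu> A = (\<lambda>x. if x = PInfty then 1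
       else if x < 0 then 0
       else Lim (at_left (real_of_ereal x)) (\<lambda>t. Inf ((\<lambda>q. \<nu> q (ereal t)) ` A)))"

definition D_bounded :: "('a::real_vector \<Rightarrow> dfun) \<Rightarrow> 'a set \<Rightarrow> bool" where
  "D_bounded \<nu> A \<longleftrightarrow> prob_radius \<nu> A \<in> D_plus"

definition D_compact :: "('a::real_vector \<Rightarrow> dfun) \<Rightarrow> 'a set \<Rightarrow> bool" where
  "D_compact \<nu> A \<longleftrightarrow> (\<forall>s::nat \<Rightarrow> 'a. (\<forall>n. s n \<in> A) \<longrightarrow>
      (\<exists>(r::nat \<Rightarrow> nat) p. strict_mono r \<and> p \<in> A \<and> strong_conv \<nu> (s \<circ> r) p))"

end

theory Submission
  imports Defs "HOL-Analysis.Analysis"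
begin

lemma DP_nonneg: "F \<in> Delta_plus \<Longrightarrow> 0 \<le> F x"
  by (simp add: Delta_plus_def)

lemma DP_le1: "F \<in> Delta_plus \<Longrightarrow> F x \<le> 1"
  by (simp add: Delta_plus_def)

lemma DP_mono: "F \<in> Delta_plus \<Longrightarrow> x \<le> y \<Longrightarrow> F x \<le> F y"
  by (simp add: Delta_plus_def mono_def)

lemma DP_nonpos: assumes "F \<in> Delta_plus" "x \<le> 0" shows "F x = 0"
proof -
  have "F x \<le> F 0" using DP_mono[OF assms(1) assms(2)] .
  moreover have "F 0 = 0" using assms(1) by (simp add: Delta_plus_def)
  ultimately show ?thesis using DP_nonneg[OF assms(1), of x] by simp
qed

lemma eps0_DP: "eps0 \<in> Delta_plus"
proof -
  have lc: "continuous (at_left x) (\<lambda>t. eps0 (ereal t))" for x :: real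
    unfolding continuous_within
  proof (cases "x \<le> 0")
    case True
    have "eventually (\<lambda>t. eps0 (ereal t) = eps0 (ereal x)) (at_left x)"
      by (rule eventually_at_leftI[of "x - 1"]) (use True in \<open>auto simp: eps0_def\<close>)
    then show "((\<lambda>t. eps0 (ereal t)) \<longlongrightarrow> eps0 (ereal x)) (at_left x)"
      by (rule tendsto_eventually)
  next
    case False
    have "eventually (\<lambda>t. eps0 (ereal t) = eps0 (ereal x)) (at_left x)"
      by (rule eventually_at_leftI[of 0]) (use False in \<open>auto simp: eps0_def\<close>)
    then show "((\<lambda>t. eps0 (ereal t)) \<longlongrightarrow> eps0 (ereal x)) (at_left x)"
      by (rule tendsto_eventually)
  qed
  have "mono eps0" unfolding mono_def eps0_def by auto
  then show ?thesis using lc unfolding Delta_plus_def by (auto simp: eps0_def)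
qed

lemma sc_tendsto1:
  assumes nu: "\<forall>p. \<nu> p \<in> Delta_plus" and sc: "strong_conv \<nu> s p" and x: "0 < x"
  shows "(\<lambda>n. \<nu> (p - s n) (ereal x)) \<longlonglongrightarrow> 1"
proof (rule tendstoI)
  fix e :: real assume e: "0 < e"
  define l where "l = min x (e/2)"
  have l: "0 < l" "l \<le> x" "l < e" using e x by (auto simp: l_def)
  from sc l(1) have ev: "eventually (\<lambda>m. s m \<in> strong_nbhd \<nu> p l) sequentially"
    by (simp add: strong_conv_def)
  show "eventually (\<lambda>n. dist (\<nu> (p - s n) (ereal x)) 1 < e) sequentially"
  proof (rule eventually_mono[OF ev])
    fix n assume "s n \<in> strong_nbhd \<nu> p l"
    hence a: "\<nu> (p - s n) (ereal l) > 1 - l" by (simp add: strong_nbhd_def)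
    have "\<nu> (p - s n) (ereal l) \<le> \<nu> (p - s n) (ereal x)"
      using DP_mono[OF nu[rule_format, of "p - s n"]] l(2) by simp
    moreover have "\<nu> (p - s n) (ereal x) \<le> 1" using DP_le1 nu by blast
    ultimately show "dist (\<nu> (p - s n) (ereal x)) 1 < e" using a l
      by (simp add: dist_real_def abs_if)
  qed
qed

lemma sc_weak:
  assumes "\<forall>p. \<nu> p \<in> Delta_plus" "strong_conv \<nu> s p"
  shows "weak_conv (\<lambda>n. \<nu> (p - s n)) eps0"
  unfolding weak_conv_def using sc_tendsto1[OF assms] by (simp add: eps0_def)

lemma sc_weak':
  assumes "\<forall>p. \<nu> p \<in> Delta_plus" "\<forall>p. \<nu> (- p) = \<nu> p" "strong_conv \<nu> s p"
  shows "weak_conv (\<lambda>n. \<nu> (s n - p)) eps0"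
proof -
  have "\<nu> (s n - p) = \<nu> (p - s n)" for n using assms(2) by (metis minus_diff_eq)
  then show ?thesis using sc_weak[OF assms(1,3)] by simp
qed

lemma sc_subseq:
  assumes "strong_conv \<nu> s p" "strict_mono r"
  shows "strong_conv \<nu> (s \<circ> r) p"
  unfolding strong_conv_def
proof (intro allI impI)
  fix l :: real assume "0 < l"
  then have "eventually (\<lambda>m. s m \<in> strong_nbhd \<nu> p l) sequentially"
    using assms(1) by (simp add: strong_conv_def)
  from eventually_subseq[OF assms(2) this]
  show "eventually (\<lambda>m. (s \<circ> r) m \<in> strong_nbhd \<nu> p l) sequentially" by simp
qed

lemma isCont_eps0: "0 < x \<Longrightarrow> isCont (\<lambda>t. eps0 (ereal t)) x"
proof -
  assume x: "0 < x"
  have "eventually (\<lambda>t. eps0 (ereal t) = 1) (at x)"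
    unfolding eventually_at by (rule exI[of _ x]) (use x in \<open>auto simp: eps0_def dist_real_def\<close>)
  then have "((\<lambda>t. eps0 (ereal t)) \<longlongrightarrow> 1) (at x)" by (rule tendsto_eventually)
  then show ?thesis using x by (simp add: continuous_at eps0_def)
qed

lemma sc_unique:
  assumes PN: "PN_space \<nu> \<tau> \<tau>s" and sp: "strong_conv \<nu> s p" and sa: "strong_conv \<nu> s a"
  shows "p = a"
proof -
  have nuD: "\<forall>p. \<nu> p \<in> Delta_plus" using PN by (simp add: PN_space_def)
  have sym: "\<forall>u. \<nu> (- u) = \<nu> u" using PN by (simp add: PN_space_def)
  have tri: "\<And>u v. \<tau> (\<nu> u) (\<nu> v) \<le> \<nu> (u + v)" using PN by (simp add: PN_space_def)
  have tf: "triangle_function \<tau>" and ct: "continuous_tf \<tau>" using PN by (simp_all add: PN_space_def)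
  have N1: "\<And>u. \<nu> u = eps0 \<longleftrightarrow> u = 0" using PN by (simp add: PN_space_def)
  have w1: "weak_conv (\<lambda>n. \<nu> (p - s n)) eps0" by (rule sc_weak[OF nuD sp])
  have w2: "weak_conv (\<lambda>n. \<nu> (s n - a)) eps0" by (rule sc_weak'[OF nuD sym sa])
  have tu: "\<forall>F\<in>Delta_plus. \<tau> F eps0 = F"
    using tf unfolding triangle_function_def by blast
  have tee: "\<tau> eps0 eps0 = eps0" using tu[rule_format, OF eps0_DP] .
  have F1: "\<And>n. \<nu> (p - s n) \<in> Delta_plus" and F2: "\<And>n. \<nu> (s n - a) \<in> Delta_plus"
    using nuD by blast+
  have w: "weak_conv (\<lambda>n. \<tau> (\<nu> (p - s n)) (\<nu> (s n - a))) (\<tau> eps0 eps0)"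
    using ct[unfolded continuous_tf_def, rule_format, OF F1 F2 eps0_DP eps0_DP w1 w2] .
  have one: "\<nu> (p - a) (ereal x) = 1" if x: "x > 0" for x
  proof -
    have "isCont (\<lambda>t. \<tau> eps0 eps0 (ereal t)) x" using isCont_eps0[OF x] tee by simp
    then have lim: "(\<lambda>n. \<tau> (\<nu> (p - s n)) (\<nu> (s n - a)) (ereal x)) \<longlonglongrightarrow> \<tau> eps0 eps0 (ereal x)"
      using w x unfolding weak_conv_def by blast
    have e1: "\<tau> eps0 eps0 (ereal x) = 1" using tee x by (simp add: eps0_def)
    have "\<tau> (\<nu> (p - s n)) (\<nu> (s n - a)) (ereal x) \<le> \<nu> (p - a) (ereal x)" for n
      using tri[of "p - s n" "s n - a"] by (simp add: le_fun_def)
    then have "1 \<le> \<nu> (p - a) (ereal x)" using LIMSEQ_le_const2[OF lim] e1 by auto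
    then show ?thesis using DP_le1[of "\<nu> (p - a)"] nuD by (metis order_antisym)
  qed
  have "\<nu> (p - a) = eps0"
  proof
    fix y :: ereal
    show "\<nu> (p - a) y = eps0 y"
    proof (cases "y \<le> 0")
      case True
      then show ?thesis using DP_nonpos nuD by (simp add: eps0_def)
    next
      case False
      then show ?thesis
      proof (cases y)
        case (real r)
        then show ?thesis using False one[of r] by (simp add: eps0_def)
      next
        case PInf
        then show ?thesis using nuD by (simp add: eps0_def Delta_plus_def)
      next
        case MInf
        then show ?thesis using False by simp
      qed
    qed
  qed
  then show ?thesis using N1 by simp
qed

theorem lemma24:
  fixes \<nu> :: "'a::real_vector \<Rightarrow> dfun" and \<tau> \<tau>s :: "dfun \<Rightarrow> dfun \<Rightarrow> dfun" and A :: "'a set"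
  assumes "PN_space \<nu> \<tau> \<tau>s"
    and "\<forall>p. \<nu> p \<in> D_plus"
    and "\<forall>F\<in>D_plus. \<forall>G\<in>D_plus. \<tau> F G \<in> D_plus"
    and "A \<noteq> {}"
    and "D_compact \<nu> A"
  shows "D_bounded \<nu> A \<and> strong_closed \<nu> A"
proof
  have PN: "PN_space \<nu> \<tau> \<tau>s" by fact
  have nuD: "\<forall>p. \<nu> p \<in> Delta_plus" using PN by (simp add: PN_space_def)
  show "strong_closed \<nu> A"
    unfolding strong_closed_def strong_open_def
  proof (rule ballI, rule ccontr)
    fix p assume p: "p \<in> - A" and nex: "\<not> (\<exists>l>0. strong_nbhd \<nu> p l \<subseteq> - A)"
    have "\<exists>q. q \<in> A \<and> \<nu> (p - q) (ereal (1 / real (Suc n))) > 1 - 1 / real (Suc n)" for n :: nat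
    proof -
      have "\<not> strong_nbhd \<nu> p (1 / real (Suc n)) \<subseteq> - A" using nex by auto
      then show ?thesis by (auto simp: strong_nbhd_def)
    qed
    then obtain q where q: "\<And>n. q n \<in> A"
      "\<And>n. \<nu> (p - q n) (ereal (1 / real (Suc n))) > 1 - 1 / real (Suc n)" by metis
    have sq: "strong_conv \<nu> q p"
      unfolding strong_conv_def
    proof (intro allI impI)
      fix l :: real assume l: "l > 0"
      obtain N :: nat where N: "inverse (real (Suc N)) < l" using reals_Archimedean[OF l] by blast
      show "eventually (\<lambda>m. q m \<in> strong_nbhd \<nu> p l) sequentially"
        unfolding eventually_sequentially
      proof (intro exI allI impI)
        fix m assume "N \<le> m"
        then have "1 / real (Suc m) \<le> 1 / real (Suc N)" by (simp add: frac_le)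
        hence lm: "1 / real (Suc m) < l" using N by (simp add: inverse_eq_divide)
        have "\<nu> (p - q m) (ereal (1 / real (Suc m))) \<le> \<nu> (p - q m) (ereal l)"
          using DP_mono[OF nuD[rule_format, of "p - q m"]] lm by simp
        then show "q m \<in> strong_nbhd \<nu> p l" using q(2)[of m] lm by (simp add: strong_nbhd_def)
      qed
    qed
    obtain r a where r: "strict_mono r" "a \<in> A" "strong_conv \<nu> (q \<circ> r) a"
      using assms(5) q(1) unfolding D_compact_def by blast
    have "strong_conv \<nu> (q \<circ> r) p" by (rule sc_subseq[OF sq r(1)])
    then have "p = a" using sc_unique[OF PN _ r(3)] by blast
    then show False using p r(2) by auto
  qed
  show "D_bounded \<nu> A"
  proof -
    have sym: "\<forall>u. \<nu> (- u) = \<nu> u" using PN by (simp add: PN_space_def)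
    have tri: "\<And>u v. \<tau> (\<nu> u) (\<nu> v) \<le> \<nu> (u + v)" using PN by (simp add: PN_space_def)
    have tf: "triangle_function \<tau>" and ct: "continuous_tf \<tau>" using PN by (simp_all add: PN_space_def)
    define \<phi> where "\<phi> t = Inf ((\<lambda>q. \<nu> q (ereal t)) ` A)" for t :: real
    define \<psi> where "\<psi> x = Sup (\<phi> ` {..<x})" for x :: real
    have bb: "bdd_below ((\<lambda>q. \<nu> q (ereal t)) ` A)" for t
      using nuD DP_nonneg by (auto intro!: bdd_belowI[of _ 0])
    have phi_le: "\<phi> t \<le> \<nu> q (ereal t)" if "q \<in> A" for q t
      unfolding \<phi>_def using that bb by (auto intro: cInf_lower)
    obtain q0 where q0: "q0 \<in> A" using assms(4) by blast
    have phi01: "0 \<le> \<phi> t \<and> \<phi> t \<le> 1" for t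
    proof
      show "0 \<le> \<phi> t" unfolding \<phi>_def using assms(4) nuD DP_nonneg by (auto intro!: cInf_greatest)
      show "\<phi> t \<le> 1" using phi_le[OF q0, of t] DP_le1[of "\<nu> q0"] nuD by (meson order_trans)
    qed
    have phi_mono: "\<phi> s \<le> \<phi> t" if "s \<le> t" for s t
      unfolding \<phi>_def[of t]
    proof (rule cInf_greatest)
      show "(\<lambda>q. \<nu> q (ereal t)) ` A \<noteq> {}" using assms(4) by simp
      fix y assume "y \<in> (\<lambda>q. \<nu> q (ereal t)) ` A"
      then obtain q where "q \<in> A" "y = \<nu> q (ereal t)" by blast
      then show "\<phi> s \<le> y" using phi_le[of q s] DP_mono[of "\<nu> q" "ereal s" "ereal t"] nuD that by force
    qed
    have phi0: "\<phi> t = 0" if "t \<le> 0" for t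
    proof -
      have "\<phi> t \<le> 0" using phi_le[OF q0, of t] DP_nonpos[of "\<nu> q0" "ereal t"] nuD that by force
      then show ?thesis using phi01[of t] by linarith
    qed
    have ne: "\<phi> ` {..<x} \<noteq> {}" for x :: real by auto
    have ba: "bdd_above (\<phi> ` S)" for S using phi01 by (auto intro!: bdd_aboveI[of _ 1])
    have phi_psi: "\<phi> s \<le> \<psi> x" if "s < x" for s x
      unfolding \<psi>_def using that ba by (auto intro!: cSup_upper)
    have psi01: "0 \<le> \<psi> x \<and> \<psi> x \<le> 1" for x
    proof
      show "0 \<le> \<psi> x" using phi_psi[of "x - 1" x] phi01[of "x-1"] by linarith
      show "\<psi> x \<le> 1" unfolding \<psi>_def using phi01 by (auto intro!: cSup_least)
    qed
    have psi_mono: "\<psi> x \<le> \<psi> y" if "x \<le> y" for x y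
      unfolding \<psi>_def using that ba by (auto intro!: cSup_subset_mono)
    have psi0: "\<psi> x = 0" if "x \<le> 0" for x
    proof -
      have "\<psi> x \<le> 0" unfolding \<psi>_def using that phi0 by (auto intro!: cSup_least)
      then show ?thesis using psi01[of x] by linarith
    qed
    have R_real: "prob_radius \<nu> A (ereal t) = \<psi> t" for t
    proof (cases "t < 0")
      case True then show ?thesis using psi0[of t] by (simp add: prob_radius_def)
    next
      case False
      have "(\<phi> \<longlongrightarrow> Sup (\<phi> ` ({..<t} \<inter> UNIV))) (at t within ({..<t} \<inter> UNIV))"
        by (rule Lim_left_bound[where K=1]) (auto intro: phi_mono phi01[THEN conjunct2])
      then have "(\<phi> \<longlongrightarrow> \<psi> t) (at_left t)" by (simp add: \<psi>_def)
      then have L: "Lim (at_left t) \<phi> = \<psi> t" by (rule tendsto_Lim[rotated]) simp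
      have "prob_radius \<nu> A (ereal t) = Lim (at_left t) (\<lambda>t. Inf ((\<lambda>q. \<nu> q (ereal t)) ` A))"
        using False by (simp add: prob_radius_def)
      also have "(\<lambda>t. Inf ((\<lambda>q. \<nu> q (ereal t)) ` A)) = \<phi>" by (rule ext) (simp add: \<phi>_def)
      finally show ?thesis using L by simp
    qed
    have R_eq: "prob_radius \<nu> A x = (case x of ereal t \<Rightarrow> \<psi> t | PInfty \<Rightarrow> 1 | MInfty \<Rightarrow> 0)" for x
    proof (cases x)
      case (real t) then show ?thesis by (simp add: R_real)
    qed (simp_all add: prob_radius_def)
    have psi_lc: "((\<lambda>t. \<psi> t) \<longlongrightarrow> \<psi> x) (at_left x)" for x
    proof (rule order_tendstoI)
      fix a assume a: "a < \<psi> x"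
      then obtain s where s: "s < x" "a < \<phi> s" using less_cSupD[OF ne a[unfolded \<psi>_def]] by auto
      show "eventually (\<lambda>t. a < \<psi> t) (at_left x)"
      proof (rule eventually_at_leftI[OF _ s(1)])
        fix t assume "t \<in> {s<..<x}"
        then have "\<phi> s \<le> \<psi> t" using phi_psi[of s t] by simp
        then show "a < \<psi> t" using s(2) by linarith
      qed
    next
      fix a assume a: "\<psi> x < a"
      show "eventually (\<lambda>t. \<psi> t < a) (at_left x)"
      proof (rule eventually_at_leftI[of "x - 1"])
        fix t assume "t \<in> {x - 1<..<x}"
        then have "\<psi> t \<le> \<psi> x" using psi_mono[of t x] by simp
        then show "\<psi> t < a" using a by linarith
      qed simp
    qed
    have main: "\<exists>T. 1 - e < \<phi> T" if e: "0 < e" for e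
    proof (rule ccontr)
      assume "\<not> ?thesis"
      then have le: "\<phi> T \<le> 1 - e" for T by (simp add: not_less)
      have "\<exists>q. q \<in> A \<and> \<nu> q (ereal (real n)) < 1 - e/2" for n :: nat
      proof -
        have "Inf ((\<lambda>q. \<nu> q (ereal (real n))) ` A) < 1 - e/2"
          using le[of "real n"] e unfolding \<phi>_def by linarith
        then show ?thesis using cInf_less_iff[OF _ bb] assms(4) by auto
      qed
      then obtain q where q: "\<And>n. q n \<in> A" "\<And>n. \<nu> (q n) (ereal (real n)) < 1 - e/2" by metis
      obtain r a where r: "strict_mono r" "a \<in> A" "strong_conv \<nu> (q \<circ> r) a"
        using assms(5) q(1) unfolding D_compact_def by blast
      have aD: "((\<lambda>t. \<nu> a (ereal t)) \<longlongrightarrow> 1) at_top" using assms(2) by (simp add: D_plus_def)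
      have "eventually (\<lambda>t. 1 - e/2 < \<nu> a (ereal t)) at_top" using order_tendstoD(1)[OF aD] e by simp
      then obtain X where X: "\<And>t. X \<le> t \<Longrightarrow> 1 - e/2 < \<nu> a (ereal t)"
        by (auto simp: eventually_at_top_linorder)
      have mo: "mono (\<lambda>t. \<nu> a (ereal t))" unfolding mono_def using DP_mono[OF nuD[rule_format, of a]] by simp
      obtain x where x: "x \<in> {max X 1<..}" "x \<notin> {t. \<not> isCont (\<lambda>t. \<nu> a (ereal t)) t}"
        using open_minus_countable[OF mono_ctble_discont[OF mo], of "{max X 1<..}"] by auto
      have w1: "weak_conv (\<lambda>n. \<nu> ((q \<circ> r) n - a)) eps0" by (rule sc_weak'[OF nuD sym r(3)])
      have w2: "weak_conv (\<lambda>n. \<nu> a) (\<nu> a)" unfolding weak_conv_def by (intro allI impI tendsto_const)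
      have F1: "\<And>n. \<nu> ((q \<circ> r) n - a) \<in> Delta_plus" using nuD by blast
      have F2: "\<And>n::nat. \<nu> a \<in> Delta_plus" using nuD by blast
      have w: "weak_conv (\<lambda>n. \<tau> (\<nu> ((q \<circ> r) n - a)) ((\<lambda>n. \<nu> a) n)) (\<tau> eps0 (\<nu> a))"
        using ct[unfolded continuous_tf_def, rule_format, OF F1 F2 eps0_DP nuD[rule_format, of a] w1 w2] .
      have tc: "\<forall>F\<in>Delta_plus. \<forall>G\<in>Delta_plus. \<tau> F G = \<tau> G F" and tu: "\<forall>F\<in>Delta_plus. \<tau> F eps0 = F"
        using tf unfolding triangle_function_def by blast+
      have te: "\<tau> eps0 (\<nu> a) = \<nu> a"
        using tc[rule_format, OF eps0_DP nuD[rule_format, of a]] tu[rule_format, OF nuD[rule_format, of a]] by simp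
      have x0: "0 < x" using x(1) by simp
      have xc: "isCont (\<lambda>t. \<nu> a (ereal t)) x" using x(2) by simp
      have lim: "(\<lambda>n. \<tau> (\<nu> ((q \<circ> r) n - a)) (\<nu> a) (ereal x)) \<longlonglongrightarrow> \<nu> a (ereal x)"
        using w[unfolded te weak_conv_def, rule_format, OF x0 xc] by simp
      have Xx: "1 - e/2 < \<nu> a (ereal x)" using X[of x] x(1) by simp
      have "eventually (\<lambda>n. 1 - e/2 < \<tau> (\<nu> ((q \<circ> r) n - a)) (\<nu> a) (ereal x)) sequentially"
        using order_tendstoD(1)[OF lim Xx] .
      then obtain N1 where N1: "\<And>n. N1 \<le> n \<Longrightarrow> 1 - e/2 < \<tau> (\<nu> (q (r n) - a)) (\<nu> a) (ereal x)"
        unfolding eventually_sequentially by auto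
      define m where "m = max N1 (nat \<lceil>x\<rceil>)"
      have "1 - e/2 < \<tau> (\<nu> (q (r m) - a)) (\<nu> a) (ereal x)" using N1[of m] m_def by simp
      also have "\<dots> \<le> \<nu> (q (r m)) (ereal x)" using tri[of "q (r m) - a" a] by (simp add: le_fun_def)
      also have "\<dots> \<le> \<nu> (q (r m)) (ereal (real (r m)))"
      proof -
        have "x \<le> real (nat \<lceil>x\<rceil>)" by (rule real_nat_ceiling_ge)
        also have "real (nat \<lceil>x\<rceil>) \<le> real m" unfolding m_def by simp
        also have "real m \<le> real (r m)" using seq_suble[OF r(1)] by simp
        finally have "ereal x \<le> ereal (real (r m))" by simp
        then show ?thesis by (rule DP_mono[OF nuD[rule_format, of "q (r m)"]])
      qed
      finally show False using q(2)[of "r m"] by linarith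
    qed
    have psi_top: "(\<psi> \<longlongrightarrow> 1) at_top"
    proof (rule order_tendstoI)
      fix a :: real assume "a < 1"
      then obtain T where T: "1 - (1 - a) < \<phi> T" using main[of "1 - a"] by auto
      show "eventually (\<lambda>t. a < \<psi> t) at_top"
        unfolding eventually_at_top_linorder
      proof (rule exI[of _ "T + 1"], intro allI impI)
        fix t assume "T + 1 \<le> t"
        then have "\<phi> T \<le> \<psi> t" using phi_psi[of T t] by simp
        then show "a < \<psi> t" using T by linarith
      qed
    next
      fix a :: real assume "1 < a"
      then have "\<forall>t. \<psi> t < a" using psi01 by (meson le_less_trans)
      then show "eventually (\<lambda>t. \<psi> t < a) at_top" by (rule always_eventually)
    qed
    have R01: "0 \<le> prob_radius \<nu> A x \<and> prob_radius \<nu> A x \<le> 1" for x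
    proof (cases x)
      case (real t) then show ?thesis using psi01[of t] by (simp add: R_real)
    qed (simp_all add: prob_radius_def)
    have Rmono: "mono (prob_radius \<nu> A)"
    proof (rule monoI)
      fix x y :: ereal assume xy: "x \<le> y"
      show "prob_radius \<nu> A x \<le> prob_radius \<nu> A y"
      proof (cases x)
        case (real s)
        show ?thesis
        proof (cases y)
          case (real t)
          then show ?thesis using xy \<open>x = ereal s\<close> psi_mono[of s t] by (simp add: R_real)
        next
          case PInf then show ?thesis using R01[of x] by (simp add: prob_radius_def)
        next
          case MInf then show ?thesis using xy \<open>x = ereal s\<close> by simp
        qed
      next
        case PInf then show ?thesis using xy by simp
      next
        case MInf then show ?thesis using R01[of y] by (simp add: prob_radius_def)
      qed
    qed
    have Rlc: "continuous (at_left x) (\<lambda>t. prob_radius \<nu> A (ereal t))" for x :: real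
      unfolding continuous_within R_real by (rule psi_lc)
    have R0: "prob_radius \<nu> A 0 = 0" using R_real[of 0] psi0[of 0] by (simp add: zero_ereal_def)
    have RP: "prob_radius \<nu> A PInfty = 1" by (simp add: prob_radius_def)
    have DP: "prob_radius \<nu> A \<in> Delta_plus"
      unfolding Delta_plus_def
      by (intro CollectI conjI allI R01[THEN conjunct1] R01[THEN conjunct2] Rmono R0 RP Rlc)
    have Rtop: "((\<lambda>t. prob_radius \<nu> A (ereal t)) \<longlongrightarrow> 1) at_top"
      unfolding R_real by (rule psi_top)
    show ?thesis unfolding D_bounded_def D_plus_def by (intro CollectI conjI DP Rtop)
  qed
qed

end
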